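(* Fix $\alpha\in(0,1)$ and consider $\mathrm{EVaR}_\alpha:\mathcal P([0,1])\to\mathbb R$. For every $c\in\mathbb R$, the sets $\{\kappa\in\mathcal P([0,1]):\mathrm{EVaR}_\alpha(\kappa)\le c\}$ and $\{\kappa\in\mathcal P([0,1]):\mathrm{EVaR}_\alpha(\kappa)\ge c\}$ are closed in the weak topology, and consequently compact.
   Context: $\mathcal P([0,1])$ denotes the Borel probability measures on $[0,1]$ with the weak topology. With $\rho:=-\log(1-\alpha)$ and $X\sim\kappa$, $\mathrm{EVaR}_\alpha(\kappa):=\inf_{z>0}\frac1z(\log\mathbb E_\kappa[e^{zX}]+\rho)$. *)

theory Defs
  imports "HOL-Probability.Probability"
begin

definition prob_measures_01 :: "real measure set" where
  "prob_measures_01 = {M. prob_space M \<and> sets M = sets (restrict_space borel {0..1})}"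

text \<open>Weak topology: the coarsest topology on prob_measures_01 making
  M \<mapsto> integral of f w.r.t. M continuous for every continuous (hence bounded) f on [0,1].\<close>
definition weak_topology_01 :: "real measure topology" where
  "weak_topology_01 =
     pullback_topology prob_measures_01
       (\<lambda>M. restrict (\<lambda>f. LINT x|M. f x) {f. continuous_on {0..1} f})
       (product_topology (\<lambda>_. euclideanreal) {f. continuous_on {0..1} f})"

definition EVaR :: "real \<Rightarrow> real measure \<Rightarrow> real" where
  "EVaR \<alpha> M = (INF z\<in>{0<..}. (1 / z) * (ln (LINT x|M. exp (z * x)) + (- ln (1 - \<alpha>))))"

end

theory Submission
  imports Defs
begin


abbreviation "CF \<equiv> {f::real\<Rightarrow>real. continuous_on {0..1} f}"

lemma cont_bound:
  assumes "continuous_on {0..1::real} f"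
  shows "\<exists>B. \<forall>x\<in>{0..1}. \<bar>f x::real\<bar> \<le> B"
proof -
  have "bounded (f ` {0..1})"
    using compact_continuous_image compact_imp_bounded assms by blast
  then show ?thesis by (force simp add: bounded_iff)
qed

lemma P_sets: "M \<in> prob_measures_01 \<Longrightarrow> sets M = sets (restrict_space borel {0..1})"
  unfolding prob_measures_01_def by auto

lemma P_prob: "M \<in> prob_measures_01 \<Longrightarrow> prob_space M"
  unfolding prob_measures_01_def by auto

lemma P_space: "M \<in> prob_measures_01 \<Longrightarrow> space M = {0..1}"
  using sets_eq_imp_space_eq[OF P_sets] by (simp add: space_restrict_space)

lemma P_meas:
  assumes "M \<in> prob_measures_01" "continuous_on {0..1} f"
  shows "f \<in> borel_measurable M"
  using measurable_cong_sets[OF P_sets[OF assms(1)] refl, of borel] borel_measurable_continuous_on_restrict[OF assms(2)]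
  by blast

lemma P_int:
  assumes "M \<in> prob_measures_01" "continuous_on {0..1} f"
  shows "integrable M (f::real\<Rightarrow>real)"
proof -
  obtain B where B: "\<forall>x\<in>{0..1}. \<bar>f x\<bar> \<le> B" using cont_bound[OF assms(2)] by blast
  interpret prob_space M using P_prob[OF assms(1)] .
  show ?thesis
    by (rule integrable_const_bound[where B=B]) (use B P_space[OF assms(1)] P_meas[OF assms] in auto)
qed

lemma P_int_le:
  assumes "M \<in> prob_measures_01" "continuous_on {0..1} f" "continuous_on {0..1} g"
    and "\<And>x. x \<in> {0..1} \<Longrightarrow> (f x::real) \<le> g x"
  shows "(LINT x|M. f x) \<le> (LINT x|M. g x)"
  by (rule integral_mono) (use assms P_int P_space in auto)

lemma P_int_const:
  assumes "M \<in> prob_measures_01"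
  shows "(LINT x|M. c) = (c::real)"
proof -
  interpret prob_space M using P_prob[OF assms(1)] .
  show ?thesis by (simp add: prob_space)
qed

lemma P_int_abs_le:
  assumes "M \<in> prob_measures_01" "continuous_on {0..1} f" "continuous_on {0..1} g"
    and "\<And>x. x \<in> {0..1} \<Longrightarrow> \<bar>f x - g x::real\<bar> \<le> e"
  shows "\<bar>(LINT x|M. f x) - (LINT x|M. g x)\<bar> \<le> e"
proof -
  have a: "f x \<le> g x + e" "g x \<le> f x + e" if "x \<in> {0..1}" for x
    using assms(4)[OF that] by (auto simp: abs_le_iff)
  have 1: "(LINT x|M. f x) \<le> (LINT x|M. g x + e)"
    by (rule P_int_le) (use assms a in \<open>auto intro!: continuous_intros\<close>)
  have 2: "(LINT x|M. g x) \<le> (LINT x|M. f x + e)"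
    by (rule P_int_le) (use assms a in \<open>auto intro!: continuous_intros\<close>)
  interpret prob_space M using P_prob[OF assms(1)] .
  have 3: "(LINT x|M. g x + e) = (LINT x|M. g x) + e" "(LINT x|M. f x + e) = (LINT x|M. f x) + e"
    using P_int[OF assms(1,3)] P_int[OF assms(1,2)] by (simp_all add: prob_space)
  show ?thesis using 1 2 3 by linarith
qed



definition "Phi M = restrict (\<lambda>f. LINT x|M. f x) CF"
abbreviation "TT \<equiv> product_topology (\<lambda>_. euclideanreal) CF"

lemma weak_eq: "weak_topology_01 = pullback_topology prob_measures_01 Phi TT"
  unfolding weak_topology_01_def Phi_def ..

lemma topspace_weak: "topspace weak_topology_01 = prob_measures_01"
  unfolding weak_eq topspace_pullback_topology by (auto simp: Phi_def)

lemma cont_integral: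
  assumes "continuous_on {0..1} f"
  shows "continuous_map weak_topology_01 euclideanreal (\<lambda>M. LINT x|M. f x)"
proof -
  have "continuous_map weak_topology_01 euclideanreal ((\<lambda>L. L f) \<circ> Phi)"
    unfolding weak_eq by (rule continuous_map_pullback) (rule continuous_map_product_projection, use assms in simp)
  moreover have "(\<lambda>L. L f) \<circ> Phi = (\<lambda>M. LINT x|M. f x)"
    using assms by (auto simp: Phi_def)
  ultimately show ?thesis by simp
qed

lemma open_integral:
  fixes f :: "real \<Rightarrow> real"
  assumes "continuous_on {0..1} f" "open U"
  shows "openin weak_topology_01 {M \<in> prob_measures_01. (LINT x|M. f x) \<in> U}"
  using openin_continuous_map_preimage[OF cont_integral[OF assms(1)], of U] assms(2)
  by (simp add: topspace_weak)

lemma openin_finite_all: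
  assumes "finite G" "\<And>z. z \<in> G \<Longrightarrow> openin X {x \<in> topspace X. P z x}"
  shows "openin X {x \<in> topspace X. \<forall>z\<in>G. P z x}"
  using assms
proof (induction G rule: finite_induct)
  case empty
  then show ?case by simp
next
  case (insert a G)
  have "{x \<in> topspace X. \<forall>z\<in>insert a G. P z x} = {x \<in> topspace X. P a x} \<inter> {x \<in> topspace X. \<forall>z\<in>G. P z x}"
    by auto
  moreover have "openin X {x \<in> topspace X. P a x}" using insert.prems by simp
  moreover have "openin X {x \<in> topspace X. \<forall>z\<in>G. P z x}" using insert.prems insert.IH by simp
  ultimately show ?case by (metis (no_types, lifting) openin_Int)
qed

lemma compactin_pullback:
  assumes "compactin T (f ` A)" "f ` A \<subseteq> topspace T"
  shows "compactin (pullback_topology A f T) A"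
  unfolding compactin_def
proof (intro conjI allI impI)
  show "A \<subseteq> topspace (pullback_topology A f T)"
    using assms(2) by (auto simp: topspace_pullback_topology)
  fix \<U> assume H: "(\<forall>U\<in>\<U>. openin (pullback_topology A f T) U) \<and> A \<subseteq> \<Union>\<U>"
  then have "\<forall>U\<in>\<U>. \<exists>V. openin T V \<and> U = f -` V \<inter> A"
    by (auto simp: openin_pullback_topology)
  then obtain V where V: "\<And>U. U \<in> \<U> \<Longrightarrow> openin T (V U) \<and> U = f -` (V U) \<inter> A"
    by metis
  have "f ` A \<subseteq> \<Union>(V ` \<U>)"
  proof
    fix y assume "y \<in> f ` A"
    then obtain a where a: "a \<in> A" "y = f a" by auto
    then obtain U where "U \<in> \<U>" "a \<in> U" using H by auto
    then show "y \<in> \<Union>(V ` \<U>)" using V[of U] a by auto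
  qed
  then obtain \<F> where F: "finite \<F>" "\<F> \<subseteq> V ` \<U>" "f ` A \<subseteq> \<Union>\<F>"
  proof -
    have "\<forall>U\<in>V ` \<U>. openin T U" using V by auto
    then show ?thesis using that assms(1)[unfolded compactin_def, THEN conjunct2, rule_format, of "V ` \<U>"] \<open>f ` A \<subseteq> \<Union>(V ` \<U>)\<close> by blast
  qed
  then obtain \<G> where G: "\<G> \<subseteq> \<U>" "finite \<G>" "\<F> = V ` \<G>"
    by (meson finite_subset_image)
  show "\<exists>\<F>. finite \<F> \<and> \<F> \<subseteq> \<U> \<and> A \<subseteq> \<Union>\<F>"
  proof (intro exI conjI)
    show "A \<subseteq> \<Union>\<G>"
    proof
      fix a assume "a \<in> A"
      then obtain U where "U \<in> \<G>" "f a \<in> V U" using F G by blast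
      then show "a \<in> \<Union>\<G>" using V[of U] G \<open>a \<in> A\<close> by auto
    qed
  qed (use G in auto)
qed



lemma zero_by_eps:
  fixes x :: real
  assumes "\<And>e. 0 < e \<Longrightarrow> \<bar>x\<bar> \<le> e"
  shows "x = 0"
proof (rule ccontr)
  assume "x \<noteq> 0"
  then have "\<bar>x\<bar> \<le> \<bar>x\<bar> / 2" using assms[of "\<bar>x\<bar>/2"] by simp
  then show False using \<open>x \<noteq> 0\<close> by simp
qed

locale clpt =
  fixes Lam :: "(real \<Rightarrow> real) \<Rightarrow> real"
  assumes Lam_top: "Lam \<in> topspace TT"
    and Lam_cl: "\<And>U. openin TT U \<Longrightarrow> Lam \<in> U \<Longrightarrow> \<exists>M\<in>prob_measures_01. Phi M \<in> U"
begin

lemma APX: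
  assumes "finite F" "F \<subseteq> CF" "0 < e"
  shows "\<exists>M\<in>prob_measures_01. \<forall>f\<in>F. \<bar>(LINT x|M. f x) - Lam f\<bar> < e"
proof -
  let ?U = "{g \<in> topspace TT. \<forall>f\<in>F. g f \<in> ball (Lam f) e}"
  have "openin TT ?U"
  proof (rule openin_finite_all[OF assms(1)])
    fix f assume "f \<in> F"
    then show "openin TT {x \<in> topspace TT. x f \<in> ball (Lam f) e}"
      using assms(2) by (intro openin_continuous_map_preimage[OF continuous_map_product_projection]) auto
  qed
  moreover have "Lam \<in> ?U" using Lam_top assms(3) by auto
  ultimately obtain M where M: "M \<in> prob_measures_01" "Phi M \<in> ?U" using Lam_cl by blast
  have "\<bar>(LINT x|M. f x) - Lam f\<bar> < e" if "f \<in> F" for f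
  proof -
    have "continuous_on {0..1} f" using that assms(2) by auto
    then show ?thesis using M(2) that by (auto simp: Phi_def dist_real_def abs_minus_commute)
  qed
  then show ?thesis using M(1) by blast
qed

lemma LIN:
  assumes "finite K" "\<And>k. k \<in> K \<Longrightarrow> h k \<in> CF"
  shows "Lam (\<lambda>x. \<Sum>k\<in>K. a k * h k x) = (\<Sum>k\<in>K. a k * Lam (h k))"
proof -
  define s where "s = (\<lambda>x. \<Sum>k\<in>K. a k * h k x)"
  define A where "A = (\<Sum>k\<in>K. \<bar>a k\<bar>)"
  have A0: "0 \<le> A" unfolding A_def by (simp add: sum_nonneg)
  have sC: "s \<in> CF" unfolding s_def using assms(2) by (auto intro!: continuous_intros)
  have "\<bar>Lam s - (\<Sum>k\<in>K. a k * Lam (h k))\<bar> \<le> e" if e: "0 < e" for e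
  proof -
    define e' where "e' = e / (1 + A)"
    have e': "0 < e'" unfolding e'_def using e A0 by simp
    obtain M where M: "M \<in> prob_measures_01"
      and ap: "\<forall>f\<in>insert s (h ` K). \<bar>(LINT x|M. f x) - Lam f\<bar> < e'"
      using APX[of "insert s (h ` K)" e'] assms sC e' by auto
    have int: "(LINT x|M. s x) = (\<Sum>k\<in>K. a k * (LINT x|M. h k x))"
    proof -
      have "(LINT x|M. s x) = (\<Sum>k\<in>K. LINT x|M. a k * h k x)"
        unfolding s_def by (rule Bochner_Integration.integral_sum) (use P_int[OF M] assms(2) in \<open>auto intro!: integrable_mult_right\<close>)
      then show ?thesis by simp
    qed
    have "\<bar>(\<Sum>k\<in>K. a k * (LINT x|M. h k x)) - (\<Sum>k\<in>K. a k * Lam (h k))\<bar>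
        = \<bar>\<Sum>k\<in>K. a k * ((LINT x|M. h k x) - Lam (h k))\<bar>"
      by (simp add: sum_subtractf algebra_simps)
    also have "\<dots> \<le> (\<Sum>k\<in>K. \<bar>a k * ((LINT x|M. h k x) - Lam (h k))\<bar>)"
      by (rule sum_abs)
    also have "\<dots> \<le> (\<Sum>k\<in>K. \<bar>a k\<bar> * e')"
    proof (intro sum_mono)
      fix k assume "k \<in> K"
      then have "\<bar>(LINT x|M. h k x) - Lam (h k)\<bar> \<le> e'" using ap by (auto intro: less_imp_le)
      then show "\<bar>a k * ((LINT x|M. h k x) - Lam (h k))\<bar> \<le> \<bar>a k\<bar> * e'"
        by (simp add: abs_mult mult_left_mono)
    qed
    also have "\<dots> = A * e'" unfolding A_def by (simp add: sum_distrib_right)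
    finally have 1: "\<bar>(LINT x|M. s x) - (\<Sum>k\<in>K. a k * Lam (h k))\<bar> \<le> A * e'" using int by simp
    have 2: "\<bar>(LINT x|M. s x) - Lam s\<bar> < e'" using ap by auto
    have "\<bar>Lam s - (\<Sum>k\<in>K. a k * Lam (h k))\<bar> \<le> e' + A * e'" using 1 2 by linarith
    also have "\<dots> = (1 + A) * e'" by (simp add: algebra_simps)
    also have "\<dots> = e" unfolding e'_def using A0 by simp
    finally show ?thesis .
  qed
  then have "Lam s - (\<Sum>k\<in>K. a k * Lam (h k)) = 0" by (rule zero_by_eps)
  then show ?thesis unfolding s_def by simp
qed

lemma CLOSE:
  assumes "f \<in> CF" "g \<in> CF" "\<And>x. x \<in> {0..1} \<Longrightarrow> \<bar>f x - g x\<bar> \<le> e"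
  shows "\<bar>Lam f - Lam g\<bar> \<le> e"
proof -
  have "\<bar>Lam f - Lam g\<bar> \<le> e + d" if d: "0 < d" for d
  proof -
    obtain M where M: "M \<in> prob_measures_01"
      and ap: "\<forall>h\<in>{f, g}. \<bar>(LINT x|M. h x) - Lam h\<bar> < d/2"
      using APX[of "{f,g}" "d/2"] assms d by auto
    have "\<bar>(LINT x|M. f x) - (LINT x|M. g x)\<bar> \<le> e"
      using P_int_abs_le[OF M _ _ assms(3)] assms by auto
    moreover have "\<bar>(LINT x|M. f x) - Lam f\<bar> < d/2" "\<bar>(LINT x|M. g x) - Lam g\<bar> < d/2" using ap by auto
    ultimately show ?thesis by linarith
  qed
  then show ?thesis by (rule field_le_epsilon)
qed

lemma POS:
  assumes "f \<in> CF" "\<And>x. x \<in> {0..1} \<Longrightarrow> 0 \<le> f x"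
  shows "0 \<le> Lam f"
proof -
  have "0 \<le> Lam f + d" if d: "0 < d" for d
  proof -
    obtain M where M: "M \<in> prob_measures_01"
      and ap: "\<forall>h\<in>{f}. \<bar>(LINT x|M. h x) - Lam h\<bar> < d"
      using APX[of "{f}" "d"] assms d by auto
    have "(LINT x|M. (\<lambda>x. 0) x) \<le> (LINT x|M. f x)"
      by (rule P_int_le[OF M]) (use assms in auto)
    then show ?thesis using ap P_int_const[OF M, of 0] by auto
  qed
  then show ?thesis by (rule field_le_epsilon)
qed

lemma ONE: "Lam (\<lambda>x. 1) = 1"
proof -
  have "\<bar>Lam (\<lambda>x. 1) - 1\<bar> \<le> d" if d: "0 < d" for d
  proof -
    obtain M where M: "M \<in> prob_measures_01"
      and ap: "\<forall>h\<in>{\<lambda>x. 1}. \<bar>(LINT x|M. h x) - Lam h\<bar> < d"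
      using APX[of "{\<lambda>x. 1}" "d"] d by auto
    then show ?thesis using P_int_const[OF M, of 1] by auto
  qed
  then have "Lam (\<lambda>x. 1) - 1 = 0" by (rule zero_by_eps)
  then show ?thesis by simp
qed

end



lemma Bern_C: "Bernstein n k \<in> CF"
proof -
  have "continuous_on {0..1} (\<lambda>x. Bernstein n k x)" unfolding Bernstein_def by (intro continuous_intros)
  then show ?thesis by simp
qed

lemma Bern_C': "continuous_on {0..1} (Bernstein n k)"
  using Bern_C by simp

context clpt begin

definition "w n k = Lam (Bernstein n k)"

lemma w_nonneg: "0 \<le> w n k"
  unfolding w_def by (rule POS[OF Bern_C]) (auto intro: Bernstein_nonneg)

lemma w_sum: "(\<Sum>k\<le>n. w n k) = 1"
proof -
  have "Lam (\<lambda>x. \<Sum>k\<le>n. 1 * Bernstein n k x) = (\<Sum>k\<le>n. 1 * Lam (Bernstein n k))"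
    by (rule LIN) (auto simp: Bern_C')
  moreover have "(\<lambda>x. \<Sum>k\<le>n. 1 * Bernstein n k x) = (\<lambda>x. 1)" by simp
  ultimately show ?thesis using ONE unfolding w_def by simp
qed

lemma BN:
  "Lam (\<lambda>x. \<Sum>k\<le>n. f (real k / real n) * Bernstein n k x) = (\<Sum>k\<le>n. f (real k / real n) * w n k)"
  unfolding w_def by (rule LIN) (auto simp: Bern_C')

lemma BN_conv:
  assumes "f \<in> CF"
  shows "(\<lambda>n. \<Sum>k\<le>n. f (real k / real n) * w n k) \<longlonglongrightarrow> Lam f"
proof (rule LIMSEQ_I)
  fix r :: real assume r: "0 < r"
  have cf: "continuous_on {0..1} f" using assms by simp
  have "\<exists>N. \<forall>n x. N \<le> n \<and> x \<in> {0..1} \<longrightarrow> \<bar>f x - (\<Sum>k\<le>n. f(k/n) * Bernstein n k x)\<bar> < r/2"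
    by (rule Bernstein_Weierstrass[OF cf]) (use r in simp)
  then obtain N where N: "\<And>n x. N \<le> n \<Longrightarrow> x \<in> {0..1} \<Longrightarrow> \<bar>f x - (\<Sum>k\<le>n. f(k/n) * Bernstein n k x)\<bar> < r/2"
    by blast
  have "norm ((\<Sum>k\<le>n. f (real k / real n) * w n k) - Lam f) < r" if "N \<le> n" for n
  proof -
    have cB: "continuous_on {0..1} (\<lambda>x. \<Sum>k\<le>n. f (real k / real n) * Bernstein n k x)"
      by (intro continuous_on_sum continuous_on_mult_left Bern_C')
    have "\<bar>Lam f - Lam (\<lambda>x. \<Sum>k\<le>n. f (real k / real n) * Bernstein n k x)\<bar> \<le> r/2"
    proof (rule CLOSE)
      show "f \<in> CF" by (rule assms)
      show "(\<lambda>x. \<Sum>k\<le>n. f (real k / real n) * Bernstein n k x) \<in> CF" using cB by simp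
      fix x :: real assume "x \<in> {0..1}"
      then show "\<bar>f x - (\<Sum>k\<le>n. f (real k / real n) * Bernstein n k x)\<bar> \<le> r/2"
        using N[OF that] by (simp add: less_imp_le)
    qed
    then have "\<bar>(\<Sum>k\<le>n. f (real k / real n) * w n k) - Lam f\<bar> \<le> r/2" using BN[of f n] by (simp add: abs_minus_commute)
    then show ?thesis using r by simp
  qed
  then show "\<exists>no. \<forall>n\<ge>no. norm ((\<Sum>k\<le>n. f (real k / real n) * w n k) - Lam f) < r" by blast
qed

lemma pp_ok: "(\<integral>\<^sup>+k. ennreal (if k \<le> n then w n k else 0) \<partial>count_space UNIV) = 1"
proof -
  have "(\<lambda>k. ennreal (if k \<le> n then w n k else 0)) = (\<lambda>k. ennreal (w n k) * indicator {..n} k)"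
    by (auto simp: fun_eq_iff split: split_indicator)
  then have "(\<integral>\<^sup>+k. ennreal (if k \<le> n then w n k else 0) \<partial>count_space UNIV)
      = (\<integral>\<^sup>+k. ennreal (w n k) \<partial>count_space {..n})"
    by (simp add: nn_integral_count_space_indicator)
  also have "\<dots> = (\<Sum>k\<le>n. ennreal (w n k))" by (simp add: nn_integral_count_space_finite)
  also have "\<dots> = ennreal (\<Sum>k\<le>n. w n k)" by (rule sum_ennreal) (simp add: w_nonneg)
  finally show ?thesis by (simp add: w_sum)
qed

definition "pp n = embed_pmf (\<lambda>k. if k \<le> n then w n k else 0)"

lemma pmf_pp: "pmf (pp n) k = (if k \<le> n then w n k else 0)"
  unfolding pp_def by (rule pmf_embed_pmf) (auto simp: w_nonneg pp_ok)

lemma set_pp: "set_pmf (pp n) \<subseteq> {..n}"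
proof
  fix k assume "k \<in> set_pmf (pp n)"
  then have "pmf (pp n) k \<noteq> 0" by (simp add: set_pmf_iff)
  then show "k \<in> {..n}" by (simp add: pmf_pp split: if_splits)
qed

definition "mu n = distr (measure_pmf (pp n)) borel (\<lambda>k. real k / real n)"

lemma mu_rd: "real_distribution (mu n)"
proof -
  have "prob_space (mu n)" unfolding mu_def
    by (rule prob_space.prob_space_distr) (simp_all add: prob_space_measure_pmf)
  moreover have "sets (mu n) = sets borel" unfolding mu_def by simp
  ultimately show ?thesis by (simp add: real_distribution_def real_distribution_axioms_def)
qed

lemma mu_int:
  assumes "g \<in> borel_measurable borel"
  shows "(LINT x|mu n. g x) = (\<Sum>k\<le>n. g (real k / real n) * w n k)"
proof -
  have "(LINT x|mu n. g x) = (LINT k|measure_pmf (pp n). g (real k / real n))"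
    unfolding mu_def by (rule integral_distr) (auto simp: assms)
  also have "\<dots> = (\<Sum>k\<le>n. g (real k / real n) * pmf (pp n) k)"
    by (rule integral_measure_pmf_real) (use set_pp in auto)
  also have "\<dots> = (\<Sum>k\<le>n. g (real k / real n) * w n k)"
    by (rule sum.cong) (auto simp: pmf_pp)
  finally show ?thesis .
qed

lemma kn_01: "k \<le> n \<Longrightarrow> real k / real n \<in> {0..1}"
  by (cases "n = 0") (auto simp: divide_le_eq_1)

lemma mu_tight: "measure (mu n) {-1<..1} = 1"
proof -
  have "measure (mu n) {-1<..1} = measure (measure_pmf (pp n)) ((\<lambda>k. real k / real n) -` {-1<..1} \<inter> space (measure_pmf (pp n)))"
    unfolding mu_def by (rule measure_distr) auto
  also have "\<dots> = 1"
  proof (subst measure_pmf.prob_eq_1)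
    show "AE x in measure_pmf (pp n). x \<in> (\<lambda>k. real k / real n) -` {- 1<..1} \<inter> space (measure_pmf (pp n))"
      unfolding AE_measure_pmf_iff
    proof
      fix y assume "y \<in> set_pmf (pp n)"
      then have "y \<le> n" using set_pp by auto
      then have "real y / real n \<in> {0..1}" by (rule kn_01)
      then have a: "0 \<le> real y / real n" "real y / real n \<le> 1" by auto
      have a2: "-1 < real y / real n" using a(1) by linarith
      show "y \<in> (\<lambda>k. real k / real n) -` {- 1<..1} \<inter> space (measure_pmf (pp n))"
        using a(2) a2 by simp
    qed
  qed auto
  finally show ?thesis .
qed

end



definition "clmp x = max 0 (min 1 (x::real))"

lemma clmp_cont: "continuous_on UNIV clmp"
  unfolding clmp_def by (intro continuous_intros)

lemma clmp_01: "clmp x \<in> {0..1}"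
  unfolding clmp_def by auto

lemma clmp_id: "x \<in> {0..1} \<Longrightarrow> clmp x = x"
  unfolding clmp_def by auto

lemma comp_clmp_cont:
  assumes "continuous_on {0..1} f"
  shows "continuous_on UNIV (\<lambda>x. f (clmp x))"
proof -
  have "range clmp \<subseteq> {0..1}" using clmp_01 by blast
  then show ?thesis using continuous_on_compose2[OF assms clmp_cont] by blast
qed

context clpt begin

lemma exists_N: "\<exists>N\<in>prob_measures_01. Phi N = Lam"
proof -
  have t2: "\<forall>\<epsilon>>0. \<exists>a b::real. a < b \<and> (\<forall>n. measure (mu n) {a<..b} > 1 - \<epsilon>)"
  proof (intro allI impI)
    fix \<epsilon> :: real assume "0 < \<epsilon>"
    show "\<exists>a b::real. a < b \<and> (\<forall>n. measure (mu n) {a<..b} > 1 - \<epsilon>)"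
      by (rule exI[of _ "-1"], rule exI[of _ 1]) (simp add: mu_tight \<open>0 < \<epsilon>\<close>)
  qed
  have tight: "tight mu" unfolding tight_def using mu_rd t2 by blast
  obtain r M where r: "strict_mono r" and M: "real_distribution M" and wc: "weak_conv_m (mu \<circ> id \<circ> r) M"
    using tight_imp_convergent_subsubsequence[OF tight, of id] by (auto simp: strict_mono_def)
  interpret M: real_distribution M by (rule M)
  have key: "(LINT x|M. f (clmp x)) = Lam f" if f: "f \<in> CF" for f
  proof -
    obtain B where B: "\<forall>x\<in>{0..1}. \<bar>f x\<bar> \<le> B" using cont_bound f by auto
    have cU: "continuous_on UNIV (\<lambda>x. f (clmp x))" using comp_clmp_cont f by simp
    have cont: "isCont (\<lambda>x. f (clmp x)) x" for x
      using cU by (simp add: continuous_on_eq_continuous_at)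
    have lim1: "(\<lambda>n. LINT x|(mu \<circ> id \<circ> r) n. f (clmp x)) \<longlonglongrightarrow> (LINT x|M. f (clmp x))"
      by (rule weak_conv_imp_integral_bdd_continuous_conv[OF _ M wc cont, of B]) (use mu_rd B clmp_01 in auto)
    have meas: "(\<lambda>x. f (clmp x)) \<in> borel_measurable borel"
      by (rule borel_measurable_continuous_onI[OF cU])
    have eq: "(LINT x|mu n. f (clmp x)) = (\<Sum>k\<le>n. f (real k / real n) * w n k)" for n
      unfolding mu_int[OF meas]
    proof (rule sum.cong)
      fix k assume "k \<in> {..n}"
      then have "clmp (real k / real n) = real k / real n" using kn_01 clmp_id by simp
      then show "f (clmp (real k / real n)) * w n k = f (real k / real n) * w n k" by simp
    qed simp
    have lim2: "(\<lambda>n. LINT x|(mu \<circ> id \<circ> r) n. f (clmp x)) \<longlonglongrightarrow> Lam f"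
      using LIMSEQ_subseq_LIMSEQ[OF BN_conv[OF f] r] eq by (simp add: comp_def)
    show ?thesis using LIMSEQ_unique lim1 lim2 by blast
  qed
  define N where "N = distr M (restrict_space borel {0..1}) clmp"
  have cb: "clmp \<in> borel_measurable M"
    using measurable_cong_sets[OF M.events_eq_borel refl, of borel] borel_measurable_continuous_onI[OF clmp_cont]
    by blast
  have cm: "clmp \<in> M \<rightarrow>\<^sub>M restrict_space borel {0..1}"
    by (rule measurable_restrict_space2) (use clmp_01 cb in auto)
  have NP: "N \<in> prob_measures_01"
    unfolding prob_measures_01_def N_def using M.prob_space_distr[OF cm] by simp
  have "Phi N = Lam"
  proof
    fix f
    show "Phi N f = Lam f"
    proof (cases "f \<in> CF")
      case True
      have "Phi N f = (LINT x|N. f x)" using True by (simp add: Phi_def)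
      also have "\<dots> = (LINT x|M. f (clmp x))"
        unfolding N_def using True by (intro integral_distr[OF cm] borel_measurable_continuous_on_restrict) auto
      finally show ?thesis using key[OF True] by simp
    next
      case False
      then show ?thesis using Lam_top by (auto simp: Phi_def PiE_def extensional_def)
    qed
  qed
  then show ?thesis using NP by blast
qed

end



definition EE :: "real measure \<Rightarrow> real \<Rightarrow> real" where "EE M z = (LINT x|M. exp (z * x))"
definition gg :: "real \<Rightarrow> real measure \<Rightarrow> real \<Rightarrow> real" where "gg a M z = (1 / z) * (ln (LINT x|M. exp (z * x)) + (- ln (1 - a)))"

lemma EVaR_gg: "EVaR a M = (INF z\<in>{0<..}. gg a M z)"
  unfolding EVaR_def gg_def ..

lemma exp_C: "continuous_on {0..1} (\<lambda>x. exp ((z::real) * x))"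
  by (intro continuous_intros)

lemma EE_mono:
  assumes "M \<in> prob_measures_01" "z' \<le> z"
  shows "EE M z' \<le> EE M z"
  unfolding EE_def by (rule P_int_le[OF assms(1) exp_C exp_C]) (use assms(2) in \<open>auto intro: mult_right_mono\<close>)

lemma EE_ge1:
  assumes "M \<in> prob_measures_01" "0 \<le> z"
  shows "1 \<le> EE M z"
proof -
  have "EE M 0 = 1" unfolding EE_def using P_int_const[OF assms(1), of 1] by simp
  then show ?thesis using EE_mono[OF assms] by simp
qed

lemma LL_nonneg:
  assumes "M \<in> prob_measures_01" "0 \<le> z"
  shows "0 \<le> ln (EE M z)"
  using EE_ge1[OF assms] by simp

lemma LL_mono:
  assumes "M \<in> prob_measures_01" "0 \<le> z'" "z' \<le> z"
  shows "ln (EE M z') \<le> ln (EE M z)"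
  using EE_ge1[OF assms(1,2)] EE_mono[OF assms(1,3)] by simp

lemma LL_jensen:
  assumes M: "M \<in> prob_measures_01" and z: "0 < z'" "z' \<le> z"
  shows "ln (EE M z') * z \<le> ln (EE M z) * z'"
proof -
  interpret prob_space M using P_prob[OF M] .
  define p where "p = z / z'"
  have p1: "1 \<le> p" unfolding p_def using z by simp
  have q: "exp (z' * x) powr p = exp (z * x)" for x
    unfolding p_def using z by (simp add: powr_def)
  have "(EE M z') powr p \<le> (LINT x|M. exp (z' * x) powr p)"
    unfolding EE_def
  proof (rule jensens_inequality[where I="{0<..}" and a=0])
    show "integrable M (\<lambda>x. exp (z' * x))" by (rule P_int[OF M exp_C])
    show "integrable M (\<lambda>x. exp (z' * x) powr p)" unfolding q by (rule P_int[OF M exp_C])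
    show "convex_on {0<..} (\<lambda>x. x powr p)" by (rule powr_convex[OF p1])
  qed auto
  also have "\<dots> = EE M z" unfolding q EE_def ..
  finally have "ln ((EE M z') powr p) \<le> ln (EE M z)"
    using EE_ge1[OF M, of z'] EE_ge1[OF M, of z] z by (subst ln_le_cancel_iff) auto
  then have "p * ln (EE M z') \<le> ln (EE M z)"
    using EE_ge1[OF M, of z'] z by (simp add: ln_powr)
  then have "(z / z') * ln (EE M z') * z' \<le> ln (EE M z) * z'"
    using z unfolding p_def by (intro mult_right_mono) auto
  then show ?thesis using z by (simp add: mult.commute)
qed



lemma Phi_top: "Phi M \<in> topspace TT"
  by (simp add: Phi_def restrict_PiE_iff)

lemma closed_image: "closedin TT (Phi ` prob_measures_01)"
proof -
  have sub: "Phi ` prob_measures_01 \<subseteq> topspace TT" using Phi_top by blast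
  have "openin TT (topspace TT - Phi ` prob_measures_01)"
  proof (subst openin_subopen, intro ballI)
    fix L assume L: "L \<in> topspace TT - Phi ` prob_measures_01"
    show "\<exists>U. openin TT U \<and> L \<in> U \<and> U \<subseteq> topspace TT - Phi ` prob_measures_01"
    proof (rule ccontr)
      assume H: "\<not> ?thesis"
      have "clpt L"
      proof
        show "L \<in> topspace TT" using L by auto
        fix U assume U: "openin TT U" "L \<in> U"
        then have "\<not> U \<subseteq> topspace TT - Phi ` prob_measures_01" using H by blast
        then obtain x where "x \<in> U" "x \<notin> topspace TT - Phi ` prob_measures_01" by blast
        then have "x \<in> Phi ` prob_measures_01" using openin_subset[OF U(1)] by blast
        then show "\<exists>M\<in>prob_measures_01. Phi M \<in> U" using \<open>x \<in> U\<close> by blast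
      qed
      then obtain N where "N \<in> prob_measures_01" "Phi N = L" using clpt.exists_N by blast
      then show False using L by blast
    qed
  qed
  then show ?thesis using sub by (simp add: closedin_def)
qed

lemma compact_P: "compactin weak_topology_01 prob_measures_01"
proof -
  define B where "B f = (SOME B. \<forall>x\<in>{0..1}. \<bar>f x\<bar> \<le> B)" for f :: "real \<Rightarrow> real"
  have B: "\<forall>x\<in>{0..1}. \<bar>f x\<bar> \<le> B f" if "f \<in> CF" for f
    unfolding B_def by (rule someI_ex) (use cont_bound that in auto)
  define K where "K = PiE CF (\<lambda>f. {-(B f)..B f})"
  have K: "compactin TT K" unfolding K_def by (subst compactin_PiE) auto
  have sub: "Phi ` prob_measures_01 \<subseteq> K"
  proof
    fix y assume "y \<in> Phi ` prob_measures_01"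
    then obtain M where M: "M \<in> prob_measures_01" "y = Phi M" by blast
    have "\<bar>(LINT x|M. f x)\<bar> \<le> B f" if f: "f \<in> CF" for f
    proof -
      have "\<bar>(LINT x|M. f x) - (LINT x|M. (\<lambda>x. 0) x)\<bar> \<le> B f"
        by (rule P_int_abs_le[OF M(1)]) (use f B[OF f] in auto)
      then show ?thesis using P_int_const[OF M(1), of 0] by simp
    qed
    then have "\<forall>f\<in>CF. (LINT x|M. f x) \<in> {-(B f)..B f}"
      by (metis abs_le_iff atLeastAtMost_iff minus_le_iff)
    then show "y \<in> K" unfolding K_def M(2) Phi_def by (simp add: restrict_PiE_iff)
  qed
  have "compactin TT (Phi ` prob_measures_01)"
    by (rule closed_compactin[OF K sub closed_image])
  then show ?thesis unfolding weak_eq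
    by (rule compactin_pullback) (use Phi_top in blast)
qed



lemma gg_EE: "gg a M z = (ln (EE M z) + (- ln (1 - a))) / z"
  unfolding gg_def EE_def by (simp only: times_divide_eq_left mult_1_left)

lemma gg_nonneg:
  assumes "M \<in> prob_measures_01" "0 < z" "0 < a" "a < 1"
  shows "0 \<le> gg a M z"
proof -
  have "0 \<le> - ln (1 - a)" using assms(3,4) by simp
  then show ?thesis unfolding gg_EE using LL_nonneg[OF assms(1), of z] assms(2) by simp
qed

lemma gg_bdd:
  assumes "M \<in> prob_measures_01" "0 < a" "a < 1"
  shows "bdd_below (gg a M ` {0<..})"
  using gg_nonneg[OF assms(1) _ assms(2,3)] by (intro bdd_belowI[of _ 0]) auto

lemma EVaR_le_gg:
  assumes "M \<in> prob_measures_01" "0 < a" "a < 1" "0 < z"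
  shows "EVaR a M \<le> gg a M z"
  unfolding EVaR_gg by (rule cINF_lower[OF gg_bdd[OF assms(1-3)]]) (use assms(4) in simp)

lemma EVaR_ge:
  assumes "\<And>z. 0 < z \<Longrightarrow> d \<le> gg a M z"
  shows "d \<le> EVaR a M"
  unfolding EVaR_gg by (rule cINF_greatest) (use assms in auto)

lemma EVaR_lt_iff:
  assumes "M \<in> prob_measures_01" "0 < a" "a < 1"
  shows "EVaR a M < c \<longleftrightarrow> (\<exists>z>0. gg a M z < c)"
  unfolding EVaR_gg using cINF_less_iff[OF _ gg_bdd[OF assms]] by auto

lemma EE_pos: "M \<in> prob_measures_01 \<Longrightarrow> 0 \<le> z \<Longrightarrow> 0 < EE M z"
  using EE_ge1[of M z] by simp

lemma open_EE:
  assumes "open U"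
  shows "openin weak_topology_01 {M \<in> prob_measures_01. EE M z \<in> U}"
  unfolding EE_def by (rule open_integral[OF exp_C assms])

lemma closed_ge:
  assumes "0 < a" "a < 1"
  shows "closedin weak_topology_01 {M \<in> prob_measures_01. EVaR a M \<ge> c}"
proof -
  define \<rho> where "\<rho> = - ln (1 - a)"
  have "openin weak_topology_01 {M \<in> prob_measures_01. EVaR a M < c}"
  proof (subst openin_subopen, intro ballI)
    fix M0 assume "M0 \<in> {M \<in> prob_measures_01. EVaR a M < c}"
    then have M0: "M0 \<in> prob_measures_01" "EVaR a M0 < c" by auto
    then obtain z where z: "0 < z" "gg a M0 z < c" using EVaR_lt_iff[OF M0(1) assms] by auto
    have iff: "gg a M z < c \<longleftrightarrow> EE M z \<in> {..<exp (c * z - \<rho>)}" if M: "M \<in> prob_measures_01" for M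
    proof -
      have "gg a M z < c \<longleftrightarrow> ln (EE M z) + \<rho> < c * z"
        unfolding gg_EE \<rho>_def using z(1) by (simp add: divide_less_eq)
      also have "\<dots> \<longleftrightarrow> ln (EE M z) < c * z - \<rho>" by linarith
      also have "\<dots> \<longleftrightarrow> EE M z < exp (c * z - \<rho>)"
        using EE_pos[OF M, of z] z(1) by (metis exp_gt_zero ln_exp ln_less_cancel_iff less_le)
      finally show ?thesis by simp
    qed
    show "\<exists>T. openin weak_topology_01 T \<and> M0 \<in> T \<and> T \<subseteq> {M \<in> prob_measures_01. EVaR a M < c}"
    proof (intro exI conjI)
      show "openin weak_topology_01 {M \<in> prob_measures_01. EE M z \<in> {..<exp (c * z - \<rho>)}}"
        by (rule open_EE) simp
      show "M0 \<in> {M \<in> prob_measures_01. EE M z \<in> {..<exp (c * z - \<rho>)}}"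
        using iff[OF M0(1)] z M0 by auto
      show "{M \<in> prob_measures_01. EE M z \<in> {..<exp (c * z - \<rho>)}} \<subseteq> {M \<in> prob_measures_01. EVaR a M < c}"
        using iff EVaR_le_gg[OF _ assms z(1)] by fastforce
    qed
  qed
  moreover have "{M \<in> prob_measures_01. EVaR a M < c} = topspace weak_topology_01 - {M \<in> prob_measures_01. EVaR a M \<ge> c}"
    by (auto simp: topspace_weak)
  ultimately show ?thesis by (simp add: closedin_def topspace_weak)
qed


lemma lsc_nbhd:
  assumes a: "0 < a" "a < 1" and M0: "M0 \<in> prob_measures_01" and cv: "c < EVaR a M0"
  shows "\<exists>T. openin weak_topology_01 T \<and> M0 \<in> T \<and> T \<subseteq> {M \<in> prob_measures_01. c < EVaR a M}"
proof -
  define \<rho> where "\<rho> = - ln (1 - a)"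
  have \<rho>: "0 < \<rho>" unfolding \<rho>_def using a by simp
  define L where "L M z = ln (EE M z)" for M z
  have gg_L: "gg a M z = (L M z + \<rho>) / z" for M z unfolding gg_EE L_def \<rho>_def ..
  define v where "v = EVaR a M0"
  have v0: "0 \<le> v" unfolding v_def by (rule EVaR_ge) (rule gg_nonneg[OF M0 _ a])
  define \<epsilon> where "\<epsilon> = v - c"
  have \<epsilon>: "0 < \<epsilon>" unfolding \<epsilon>_def v_def using cv by simp
  define w where "w = v - \<epsilon>/2"
  have hv: "v * z \<le> L M0 z + \<rho>" if "0 < z" for z
  proof -
    have "v \<le> (L M0 z + \<rho>) / z" using EVaR_le_gg[OF M0 a that] unfolding v_def gg_L .
    then show ?thesis using that by (simp add: le_divide_eq)
  qed
  define \<delta> where "\<delta> = \<rho> / (v+1)"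
  have \<delta>: "0 < \<delta>" unfolding \<delta>_def using \<rho> v0 by simp
  have \<delta>v: "(v+1) * \<delta> = \<rho>" unfolding \<delta>_def using v0 by simp
  define \<eta> where "\<eta> = \<delta> * \<epsilon> / 4"
  have \<eta>: "0 < \<eta>" unfolding \<eta>_def using \<delta> \<epsilon> by simp
  define h where "h = \<delta> * \<epsilon> / (4 * (v+1))"
  have h: "0 < h" unfolding h_def using \<delta> \<epsilon> v0 by simp
  have hv1: "h * (v+1) = \<delta> * \<epsilon> / 4"
  proof -
    have "h = (\<delta> * \<epsilon> / 4) / (v+1)" unfolding h_def by (simp add: divide_divide_eq_left mult.commute)
    moreover have "v + 1 \<noteq> 0" using v0 by simp
    ultimately show ?thesis using nonzero_eq_divide_eq by metis
  qed
  define Z where "Z = max \<delta> (4 * (\<rho> + \<eta>) / \<epsilon>)"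
  have Z\<delta>: "\<delta> \<le> Z" unfolding Z_def by simp
  have Z0: "0 < Z" using \<delta> Z\<delta> by simp
  have Zb: "\<rho> + \<eta> \<le> Z * \<epsilon> / 4"
  proof -
    have "4 * (\<rho> + \<eta>) / \<epsilon> \<le> Z" unfolding Z_def by simp
    then have "4 * (\<rho> + \<eta>) \<le> Z * \<epsilon>" using \<epsilon> by (simp add: divide_le_eq)
    then show ?thesis by simp
  qed
  define Nn where "Nn = nat \<lceil>(Z - \<delta>) / h\<rceil>"
  define G where "G = insert Z ((\<lambda>i. \<delta> + real i * h) ` {..Nn})"
  have fG: "finite G" unfolding G_def by simp
  have G0: "0 < z" if "z \<in> G" for z
  proof -
    have "0 < \<delta> + real i * h" for i using \<delta> h by (simp add: add_pos_nonneg)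
    then show ?thesis using that Z0 unfolding G_def by auto
  qed
  define T where "T = {M \<in> topspace weak_topology_01. \<forall>z\<in>G. EE M z \<in> {exp (L M0 z - \<eta>)<..}}"
  have Topen: "openin weak_topology_01 T"
    unfolding T_def
  proof (rule openin_finite_all[OF fG])
    fix z assume "z \<in> G"
    show "openin weak_topology_01 {M \<in> topspace weak_topology_01. EE M z \<in> {exp (L M0 z - \<eta>)<..}}"
      using open_EE[of "{exp (L M0 z - \<eta>)<..}" z] by (simp add: topspace_weak)
  qed
  have M0T: "M0 \<in> T"
  proof -
    have "EE M0 z \<in> {exp (L M0 z - \<eta>)<..}" if "z \<in> G" for z
    proof -
      have "exp (L M0 z - \<eta>) < exp (L M0 z)" using \<eta> by simp
      also have "exp (L M0 z) = EE M0 z" unfolding L_def using EE_pos[OF M0, of z] G0[OF that] by simp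
      finally show ?thesis by simp
    qed
    then show ?thesis unfolding T_def using M0 by (simp add: topspace_weak)
  qed
  have key: "w * z \<le> L M z + \<rho>" if M: "M \<in> T" and z: "0 < z" for M z
  proof -
    have MP: "M \<in> prob_measures_01" using M unfolding T_def topspace_weak by simp
    have LG: "L M0 y - \<eta> < L M y" if "y \<in> G" for y
    proof -
      have "exp (L M0 y - \<eta>) < EE M y" using M that unfolding T_def by auto
      then have "ln (exp (L M0 y - \<eta>)) < ln (EE M y)"
        using EE_pos[OF MP, of y] G0[OF that] by (subst ln_less_cancel_iff) auto
      then show ?thesis unfolding L_def by simp
    qed
    have Lnn: "0 \<le> L M z" unfolding L_def using LL_nonneg[OF MP] z by simp
    consider "z \<le> \<delta>" | "Z \<le> z" | "\<delta> < z" "z < Z" by linarith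
    then show ?thesis
    proof cases
      case 1
      have "w \<le> v + 1" unfolding w_def using \<epsilon> by simp
      then have "w * z \<le> (v+1) * z" using z by (intro mult_right_mono) auto
      also have "\<dots> \<le> (v+1) * \<delta>" using 1 v0 by (intro mult_left_mono) auto
      also have "\<dots> = \<rho>" by (rule \<delta>v)
      finally show ?thesis using Lnn by simp
    next
      case 2
      have ZG: "Z \<in> G" unfolding G_def by simp
      have j: "L M Z * z \<le> L M z * Z" unfolding L_def by (rule LL_jensen[OF MP Z0 2])
      have "v * Z - \<rho> - \<eta> < L M Z" using hv[OF Z0] LG[OF ZG] by simp
      then have "(v * Z - \<rho> - \<eta>) * z \<le> L M Z * z" using z by (intro mult_right_mono) auto
      moreover have "(v * Z - Z * \<epsilon> / 4) * z \<le> (v * Z - \<rho> - \<eta>) * z" using Zb z by (intro mult_right_mono) auto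
      ultimately have "(v * z - z * \<epsilon> / 4) * Z \<le> L M z * Z" using j by (simp add: algebra_simps)
      then have A: "v * z - z * \<epsilon> / 4 \<le> L M z" using Z0 by simp
      have B: "w * z = v * z - z * \<epsilon> / 2" unfolding w_def by (simp add: algebra_simps)
      have C: "0 \<le> z * \<epsilon>" using z \<epsilon> by simp
      show ?thesis using A B C \<rho> by linarith
    next
      case 3
      define y where "y = (z - \<delta>) / h"
      have y0: "0 \<le> y" unfolding y_def using 3 h by simp
      define i where "i = nat \<lfloor>y\<rfloor>"
      have ri: "real i = of_int \<lfloor>y\<rfloor>" unfolding i_def using y0 by simp
      have iy: "real i \<le> y" "y < real i + 1" using ri by linarith+
      define z' where "z' = \<delta> + real i * h"
      have z'z: "z' \<le> z"
      proof -
        have "real i * h \<le> y * h" using iy(1) h by (intro mult_right_mono) auto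
        also have "y * h = z - \<delta>" unfolding y_def using h by simp
        finally show ?thesis unfolding z'_def by simp
      qed
      have zz': "z < z' + h"
      proof -
        have "y * h < (real i + 1) * h" using iy(2) h by (intro mult_strict_right_mono) auto
        also have "y * h = z - \<delta>" unfolding y_def using h by simp
        finally show ?thesis unfolding z'_def by (simp add: algebra_simps)
      qed
      have iN: "i \<le> Nn"
      proof -
        have "y \<le> (Z - \<delta>) / h" unfolding y_def using 3 h by (simp add: divide_right_mono)
        then have "\<lfloor>y\<rfloor> \<le> \<lceil>(Z - \<delta>) / h\<rceil>" using floor_mono floor_le_ceiling order_trans by blast
        then show ?thesis unfolding i_def Nn_def by (simp add: nat_mono)
      qed
      have z'G: "z' \<in> G" unfolding G_def z'_def using iN by auto
      have z'0: "\<delta> \<le> z'" unfolding z'_def using h by simp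
      have "L M z' \<le> L M z" unfolding L_def by (rule LL_mono[OF MP _ z'z]) (use z'0 \<delta> in simp)
      moreover have "L M0 z' - \<eta> < L M z'" by (rule LG[OF z'G])
      moreover have "v * z' \<le> L M0 z' + \<rho>" by (rule hv) (use z'0 \<delta> in simp)
      ultimately have A: "v * z' - \<eta> \<le> L M z + \<rho>" by simp
      have "w * z = v * z - z * \<epsilon> / 2" unfolding w_def by (simp add: algebra_simps)
      also have "\<dots> \<le> v * (z' + h) - z * \<epsilon> / 2" using zz' v0 by (simp add: mult_left_mono)
      also have "\<dots> \<le> v * z' - \<eta>"
      proof -
        have "v * h \<le> (v+1) * h" using h by simp
        then have "v * h \<le> \<delta> * \<epsilon> / 4" using hv1 by (simp add: mult.commute)
        moreover have "\<delta> * \<epsilon> \<le> z * \<epsilon>" using 3 \<epsilon> by simp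
        ultimately show ?thesis unfolding \<eta>_def by (simp add: algebra_simps)
      qed
      finally show ?thesis using A by simp
    qed
  qed
  have "T \<subseteq> {M \<in> prob_measures_01. c < EVaR a M}"
  proof
    fix M assume M: "M \<in> T"
    have MP: "M \<in> prob_measures_01" using M unfolding T_def topspace_weak by simp
    have "w \<le> EVaR a M"
    proof (rule EVaR_ge)
      fix z :: real assume z: "0 < z"
      show "w \<le> gg a M z" unfolding gg_L using key[OF M z] z by (simp add: le_divide_eq)
    qed
    moreover have "c < w" unfolding w_def using \<epsilon> \<epsilon>_def by linarith
    ultimately show "M \<in> {M \<in> prob_measures_01. c < EVaR a M}" using MP by simp
  qed
  then show ?thesis using Topen M0T by blast
qed

lemma closed_le:
  assumes "0 < a" "a < 1"
  shows "closedin weak_topology_01 {M \<in> prob_measures_01. EVaR a M \<le> c}"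
proof -
  have "openin weak_topology_01 {M \<in> prob_measures_01. c < EVaR a M}"
  proof (subst openin_subopen, intro ballI)
    fix M0 assume "M0 \<in> {M \<in> prob_measures_01. c < EVaR a M}"
    then show "\<exists>T. openin weak_topology_01 T \<and> M0 \<in> T \<and> T \<subseteq> {M \<in> prob_measures_01. c < EVaR a M}"
      using lsc_nbhd[OF assms] by auto
  qed
  moreover have "{M \<in> prob_measures_01. c < EVaR a M} = topspace weak_topology_01 - {M \<in> prob_measures_01. EVaR a M \<le> c}"
    by (auto simp: topspace_weak)
  ultimately show ?thesis by (simp add: closedin_def topspace_weak)
qed



theorem corollary4:
  fixes \<alpha> c :: real
  assumes "0 < \<alpha>" and "\<alpha> < 1"
  shows "closedin weak_topology_01 {M \<in> prob_measures_01. EVaR \<alpha> M \<le> c}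
       \<and> closedin weak_topology_01 {M \<in> prob_measures_01. EVaR \<alpha> M \<ge> c}
       \<and> compactin weak_topology_01 {M \<in> prob_measures_01. EVaR \<alpha> M \<le> c}
       \<and> compactin weak_topology_01 {M \<in> prob_measures_01. EVaR \<alpha> M \<ge> c}"
proof -
  have 1: "closedin weak_topology_01 {M \<in> prob_measures_01. EVaR \<alpha> M \<le> c}"
    by (rule closed_le[OF assms])
  have 2: "closedin weak_topology_01 {M \<in> prob_measures_01. EVaR \<alpha> M \<ge> c}"
    by (rule closed_ge[OF assms])
  have 3: "compactin weak_topology_01 {M \<in> prob_measures_01. EVaR \<alpha> M \<le> c}"
    by (rule closed_compactin[OF compact_P _ 1]) auto
  have 4: "compactin weak_topology_01 {M \<in> prob_measures_01. EVaR \<alpha> M \<ge> c}"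
    by (rule closed_compactin[OF compact_P _ 2]) auto
  show ?thesis using 1 2 3 4 by blast
qed

end
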